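(* Let $P_n$ be a labeled path with ad-pattern $w=w_1\cdots w_{n-1}$. Suppose that at least one of the following holds: (i) $RT(P_n)$ contains a $(3,1,1)$ sub-ribbon, i.e. $w$ contains $aadd$ as a factor (consecutive letters); (ii) $RT(P_n)$ begins with a $(2,1,1)$ sub-ribbon, i.e. $w$ begins with $add$; (iii) $RT(P_n)$ ends with a $(3,1)$ sub-ribbon, i.e. $w$ ends with $aad$. Then $X(P_n;\mathbf{x},q)$ is not symmetric.
   Context: A labeled path $P_n$ is the path graph with vertices $v_1,\dots,v_n$ (edges $v_iv_{i+1}$) where $v_i$ carries label $\sigma_i$ for a permutation $\sigma$ of $[n]$; vertices are identified with labels. A proper coloring is $c\colon[n]\to\{1,2,\dots\}$ with adjacent vertices colored differently; $\operatorname{asc}(c)=\#\{ij\in E: i<j,\ c(i)<c(j)\}$. The CQF is $X(P_n;\mathbf{x},q)=\sum_{c \text{ proper}} x_{c(1)}\cdots x_{c(n)}q^{\operatorname{asc}(c)}$; it is symmetric if each coefficient of $q^k$ is a symmetric function. The ad-pattern of $P_n$ is $w_1\cdots w_{n-1}$ with $w_i=a$ if $\sigma_i<\sigma_{i+1}$ and $w_i=d$ otherwise. The ribbon diagram $RT(P_n)$: start with box $1$, and for $i=1,\dots,n-1$ place box $i+1$ immediately right of box $i$ if $w_i=a$ and immediately above box $i$ if $w_i=d$. A $\beta$ sub-ribbon is a set of consecutive boxes whose shape is the ribbon with row lengths $\beta$ (bottom to top). *)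

theory Defs
  imports Main "HOL-Library.FuncSet" "HOL-Combinatorics.Permutations"
begin

text \<open>A labeled path P_n: vertices v_1..v_n, vertex v_i carries label sigma i,
  where sigma permutes {1..n}. Vertices are identified with labels, so the
  edges are {sigma i, sigma (i+1)} for 1 <= i < n.\<close>

definition labeled_path :: "nat \<Rightarrow> (nat \<Rightarrow> nat) \<Rightarrow> bool" where
  "labeled_path n \<sigma> \<longleftrightarrow> \<sigma> permutes {1..n}"

definition proper_coloring :: "nat \<Rightarrow> (nat \<Rightarrow> nat) \<Rightarrow> (nat \<Rightarrow> nat) \<Rightarrow> bool" where
  "proper_coloring n \<sigma> c \<longleftrightarrow> c \<in> {1..n} \<rightarrow>\<^sub>E {1..} \<and>
     (\<forall>i\<in>{1..<n}. c (\<sigma> i) \<noteq> c (\<sigma> (Suc i)))"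

definition asc :: "nat \<Rightarrow> (nat \<Rightarrow> nat) \<Rightarrow> (nat \<Rightarrow> nat) \<Rightarrow> nat" where
  "asc n \<sigma> c = card {i\<in>{1..<n}.
      c (min (\<sigma> i) (\<sigma> (Suc i))) < c (max (\<sigma> i) (\<sigma> (Suc i)))}"

text \<open>Coefficient of q^k x^alpha in X(P_n; x, q), where the monomial x^alpha is
  given by an exponent function alpha (alpha i = exponent of x_i):
  the number of proper colorings with exactly alpha i vertices of colour i and
  k ascents.\<close>
definition cqf_coeff :: "nat \<Rightarrow> (nat \<Rightarrow> nat) \<Rightarrow> nat \<Rightarrow> (nat \<Rightarrow> nat) \<Rightarrow> nat" where
  "cqf_coeff n \<sigma> k \<alpha> = card {c. proper_coloring n \<sigma> c \<and> asc n \<sigma> c = k \<and>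
      (\<forall>i. card {v\<in>{1..n}. c v = i} = \<alpha> i)}"

definition cqf_symmetric :: "nat \<Rightarrow> (nat \<Rightarrow> nat) \<Rightarrow> bool" where
  "cqf_symmetric n \<sigma> \<longleftrightarrow> (\<forall>k \<alpha> \<pi>. \<pi> permutes {1..} \<longrightarrow>
      cqf_coeff n \<sigma> k (\<alpha> \<circ> \<pi>) = cqf_coeff n \<sigma> k \<alpha>)"

datatype ad = A | D

definition ad_pattern :: "nat \<Rightarrow> (nat \<Rightarrow> nat) \<Rightarrow> ad list" where
  "ad_pattern n \<sigma> = map (\<lambda>i. if \<sigma> i < \<sigma> (Suc i) then A else D) [1..<n]"

end

theory Submission
  imports Defs
begin

lemma main_lemma:
  fixes n v :: nat and \<sigma> :: "nat \<Rightarrow> nat"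
  assumes perm: "\<sigma> permutes {1..n}"
    and v2: "2 \<le> v" and vn: "Suc v \<le> n"
    and h1: "\<sigma> (v-1) < \<sigma> v" and h1': "\<sigma> (Suc v) < \<sigma> v"
    and h2: "v - 1 = 1 \<or> \<sigma> (v-2) < \<sigma> (v-1)"
    and h3: "Suc v = n \<or> \<sigma> (Suc (Suc v)) < \<sigma> (Suc v)"
  shows "\<not> cqf_symmetric n \<sigma>"
proof
  assume sym: "cqf_symmetric n \<sigma>"
  have inj: "inj \<sigma>" using perm permutes_inj by blast
  have img: "\<And>i. i \<in> {1..n} \<Longrightarrow> \<sigma> i \<in> {1..n}" using permutes_in_image[OF perm] by presburger
  define lv where "lv = \<sigma> v"
  define lx where "lx = \<sigma> (v-1)"
  define ly where "ly = \<sigma> (Suc v)"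
  define adj where "adj l m \<longleftrightarrow> (\<exists>i\<in>{1..<n}. (\<sigma> i = l \<and> \<sigma> (Suc i) = m) \<or> (\<sigma> i = m \<and> \<sigma> (Suc i) = l))" for l m
  define PL where "PL = {l\<in>{1..n}. \<forall>m. adj l m \<longrightarrow> m < l}"
  have injE: "\<And>i j. \<sigma> i = \<sigma> j \<Longrightarrow> i = j" using inj by (meson injD)
  have adj_v: "m < lv" if "adj lv m" for m
  proof -
    from that obtain i where i: "i \<in> {1..<n}" and
      c: "(\<sigma> i = \<sigma> v \<and> \<sigma> (Suc i) = m) \<or> (\<sigma> i = m \<and> \<sigma> (Suc i) = \<sigma> v)"
      unfolding adj_def lv_def by blast
    from c show ?thesis
    proof
      assume "\<sigma> i = \<sigma> v \<and> \<sigma> (Suc i) = m"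
      then have "i = v" "\<sigma> (Suc i) = m" using injE by auto
      then show ?thesis using h1' lv_def by simp
    next
      assume a: "\<sigma> i = m \<and> \<sigma> (Suc i) = \<sigma> v"
      then have "Suc i = v" using injE by blast
      then have "i = v - 1" by simp
      then show ?thesis using a h1 lv_def by simp
    qed
  qed
  have adj_x: "m = lv \<or> m < lx" if "adj lx m" for m
  proof -
    from that obtain i where i: "i \<in> {1..<n}" and
      c: "(\<sigma> i = \<sigma> (v-1) \<and> \<sigma> (Suc i) = m) \<or> (\<sigma> i = m \<and> \<sigma> (Suc i) = \<sigma> (v-1))"
      unfolding adj_def lx_def by blast
    from c show ?thesis
    proof
      assume a: "\<sigma> i = \<sigma> (v-1) \<and> \<sigma> (Suc i) = m"
      then have "i = v - 1" using injE by blast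
      then have "Suc i = v" using v2 by simp
      then show ?thesis using a lv_def by simp
    next
      assume a: "\<sigma> i = m \<and> \<sigma> (Suc i) = \<sigma> (v-1)"
      then have "Suc i = v - 1" using injE by blast
      then have "i = v - 2" "v - 1 \<noteq> 1" using i by auto
      then show ?thesis using a h2 lx_def by simp
    qed
  qed
  have adj_y: "m = lv \<or> m < ly" if "adj ly m" for m
  proof -
    from that obtain i where i: "i \<in> {1..<n}" and
      c: "(\<sigma> i = \<sigma> (Suc v) \<and> \<sigma> (Suc i) = m) \<or> (\<sigma> i = m \<and> \<sigma> (Suc i) = \<sigma> (Suc v))"
      unfolding adj_def ly_def by blast
    from c show ?thesis
    proof
      assume a: "\<sigma> i = \<sigma> (Suc v) \<and> \<sigma> (Suc i) = m"
      then have "i = Suc v" using injE by blast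
      then have "Suc v \<noteq> n" using i by auto
      then show ?thesis using a h3 ly_def \<open>i = Suc v\<close> by simp
    next
      assume a: "\<sigma> i = m \<and> \<sigma> (Suc i) = \<sigma> (Suc v)"
      then have "Suc i = Suc v" using injE by blast
      then show ?thesis using a lv_def by simp
    qed
  qed
  have pv: "v - 1 \<in> {1..n}" "v \<in> {1..n}" "Suc v \<in> {1..n}" using v2 vn by auto
  have rng: "lv \<in> {1..n}" "lx \<in> {1..n}" "ly \<in> {1..n}"
    using img[OF pv(1)] img[OF pv(2)] img[OF pv(3)] unfolding lv_def lx_def ly_def by auto
  have lvPL: "lv \<in> PL" using adj_v rng unfolding PL_def by blast
  have adj_xv: "adj lx lv" unfolding adj_def lx_def lv_def
    using v2 vn by (intro bexI[of _ "v - 1"]) auto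
  have adj_yv: "adj ly lv" unfolding adj_def ly_def lv_def
    using v2 vn by (intro bexI[of _ "v"]) auto
  have lxPL: "lx \<notin> PL" using adj_xv h1 unfolding PL_def lx_def lv_def by auto
  have lyPL: "ly \<notin> PL" using adj_yv h1' unfolding PL_def ly_def lv_def by auto
  have lxly: "lx \<noteq> ly" using injE v2 unfolding lx_def ly_def by force
  have lvx: "lv \<noteq> lx" "lv \<noteq> ly" using h1 h1' unfolding lv_def lx_def ly_def by auto
  define S2 where "S2 = (PL - {lv}) \<union> {lx, ly}"
  define c0 where "c0 l = (if l \<in> {1..n} then (if l = lv then 1 else if l \<in> S2 then 2 else n + 3 - l) else undefined)" for l
  have adj_rng: "l \<in> {1..n} \<and> m \<in> {1..n}" if "adj l m" for l m
    using that img unfolding adj_def by auto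
  have key: "c0 hi < c0 lo" if a: "adj lo hi" and lh: "lo < hi" for lo hi
  proof -
    have r: "lo \<in> {1..n}" "hi \<in> {1..n}" using adj_rng a by auto
    have lo_ne: "lo \<noteq> lv" using adj_v a lh by force
    show ?thesis
    proof (cases "lo \<in> S2")
      case True
      have "hi = lv"
      proof -
        have "lo \<notin> PL" using a lh unfolding PL_def by force
        then have "lo = lx \<or> lo = ly" using True unfolding S2_def by blast
        then show ?thesis using adj_x adj_y a lh by force
      qed
      then show ?thesis using True r lo_ne unfolding c0_def by simp
    next
      case False
      then show ?thesis using r lo_ne lh unfolding c0_def by auto
    qed
  qed
  have adj_edge: "adj (\<sigma> i) (\<sigma> (Suc i))" if "i \<in> {1..<n}" for i
    using that unfolding adj_def by blast
  have adj_sym: "adj l m \<Longrightarrow> adj m l" for l m unfolding adj_def by blast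
  have edge_ne: "\<sigma> i \<noteq> \<sigma> (Suc i)" for i using injE by force
  have edge0: "c0 (max (\<sigma> i) (\<sigma> (Suc i))) < c0 (min (\<sigma> i) (\<sigma> (Suc i)))" if "i \<in> {1..<n}" for i
  proof (cases "\<sigma> i < \<sigma> (Suc i)")
    case True then show ?thesis using key adj_edge[OF that] by (simp add: max_def min_def)
  next
    case False
    then have "\<sigma> (Suc i) < \<sigma> i" using edge_ne[of i] by linarith
    then show ?thesis using key adj_sym[OF adj_edge[OF that]] by (simp add: max_def min_def)
  qed
  have c0_pos: "c0 l \<ge> 1" if "l \<in> {1..n}" for l using that unfolding c0_def by auto
  have c0_le: "c0 l \<le> n + 2" if "l \<in> {1..n}" for l using that unfolding c0_def by auto
  have proper0: "proper_coloring n \<sigma> c0"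
    unfolding proper_coloring_def
  proof
    show "c0 \<in> {1..n} \<rightarrow>\<^sub>E {1..}" using c0_pos unfolding PiE_def extensional_def
      by (auto simp: c0_def)
    show "\<forall>i\<in>{1..<n}. c0 (\<sigma> i) \<noteq> c0 (\<sigma> (Suc i))"
    proof
      fix i assume i: "i \<in> {1..<n}"
      show "c0 (\<sigma> i) \<noteq> c0 (\<sigma> (Suc i))" using edge0[OF i] edge_ne[of i]
        by (cases "\<sigma> i < \<sigma> (Suc i)") (auto simp: max_def min_def)
    qed
  qed
  have asc0: "asc n \<sigma> c0 = 0"
    unfolding asc_def using edge0 by (auto intro!: card_eq_0_iff[THEN iffD2] simp: not_less_iff_gr_or_eq)
  define \<alpha> where "\<alpha> j = card {l\<in>{1..n}. c0 l = j}" for j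
  define \<tau> where "\<tau> = Transposition.transpose (1::nat) 2"
  have tperm: "\<tau> permutes {1..}" unfolding \<tau>_def by (rule permutes_swap_id) auto
  have eq: "cqf_coeff n \<sigma> 0 (\<alpha> \<circ> \<tau>) = cqf_coeff n \<sigma> 0 \<alpha>"
    using sym tperm unfolding cqf_symmetric_def by blast
  let ?SA = "{c. proper_coloring n \<sigma> c \<and> asc n \<sigma> c = 0 \<and> (\<forall>i. card {v\<in>{1..n}. c v = i} = \<alpha> i)}"
  have c0in: "c0 \<in> ?SA" using proper0 asc0 unfolding \<alpha>_def by auto
  have finSA: "finite ?SA"
  proof (rule finite_subset)
    show "?SA \<subseteq> {1..n} \<rightarrow>\<^sub>E {1..n+2}"
    proof
      fix c assume c: "c \<in> ?SA"
      then have cE: "c \<in> {1..n} \<rightarrow>\<^sub>E {1..}" unfolding proper_coloring_def by auto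
      have "c l \<le> n + 2" if l: "l \<in> {1..n}" for l
      proof -
        have "card {m\<in>{1..n}. c m = c l} = \<alpha> (c l)" using c by auto
        moreover have "card {m\<in>{1..n}. c m = c l} \<noteq> 0" using l by auto
        ultimately have "{m\<in>{1..n}. c0 m = c l} \<noteq> {}" unfolding \<alpha>_def by (metis card.empty)
        then obtain m where "m \<in> {1..n}" "c0 m = c l" by blast
        then show ?thesis using c0_le by metis
      qed
      then show "c \<in> {1..n} \<rightarrow>\<^sub>E {1..n+2}" using cE unfolding PiE_def by auto
    qed
    show "finite ({1..n} \<rightarrow>\<^sub>E {1..n+2})" by (rule finite_PiE) auto
  qed
  have rhs: "cqf_coeff n \<sigma> 0 \<alpha> \<noteq> 0"
  proof -
    have "?SA \<noteq> {}" using c0in by blast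
    then have "card ?SA \<noteq> 0" using card_0_eq[OF finSA] by blast
    then show ?thesis unfolding cqf_coeff_def .
  qed
  have finPL: "finite PL" unfolding PL_def by auto
  have S2sub: "S2 \<subseteq> {1..n}" using rng unfolding S2_def PL_def by auto
  have lvS2: "lv \<notin> S2" using lvx unfolding S2_def by auto
  have cls2: "{l\<in>{1..n}. c0 l = 2} = S2"
    using S2sub lvS2 unfolding c0_def by auto
  have cardS2: "card S2 = card PL + 1"
  proof -
    have d: "(PL - {lv}) \<inter> {lx, ly} = {}" using lxPL lyPL by auto
    have "card S2 = card (PL - {lv}) + card {lx, ly}"
      unfolding S2_def using finPL d by (intro card_Un_disjoint) auto
    moreover have "card (PL - {lv}) = card PL - 1" using lvPL finPL by simp
    moreover have "card PL \<ge> 1" using lvPL finPL by (metis One_nat_def Suc_leI card_gt_0_iff empty_iff)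
    moreover have "card {lx, ly} = 2" using lxly by simp
    ultimately show ?thesis by simp
  qed
  have lhs: "cqf_coeff n \<sigma> 0 (\<alpha> \<circ> \<tau>) = 0"
  proof -
    let ?SB = "{c. proper_coloring n \<sigma> c \<and> asc n \<sigma> c = 0 \<and> (\<forall>i. card {v\<in>{1..n}. c v = i} = (\<alpha> \<circ> \<tau>) i)}"
    have "?SB = {}"
    proof -
      { fix c assume c: "proper_coloring n \<sigma> c" "asc n \<sigma> c = 0"
          "\<forall>i. card {v\<in>{1..n}. c v = i} = (\<alpha> \<circ> \<tau>) i"
        have c1: "card {v\<in>{1..n}. c v = 1} = card PL + 1"
          using c(3) cls2 cardS2 unfolding \<alpha>_def \<tau>_def by simp
        have cE: "c \<in> {1..n} \<rightarrow>\<^sub>E {1..}" using c(1) unfolding proper_coloring_def by auto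
        have cne: "c (\<sigma> i) \<noteq> c (\<sigma> (Suc i))" if "i \<in> {1..<n}" for i
          using c(1) that unfolding proper_coloring_def by auto
        have noasc: "\<not> c (min (\<sigma> i) (\<sigma> (Suc i))) < c (max (\<sigma> i) (\<sigma> (Suc i)))" if "i \<in> {1..<n}" for i
        proof -
          have "finite {i\<in>{1..<n}. c (min (\<sigma> i) (\<sigma> (Suc i))) < c (max (\<sigma> i) (\<sigma> (Suc i)))}" by auto
          then show ?thesis using c(2) that unfolding asc_def by auto
        qed
        have desc: "c hi < c lo" if a1: "adj lo hi" and a2: "lo < hi" for lo hi
        proof -
          obtain i where i: "i \<in> {1..<n}" and
            cc: "(\<sigma> i = lo \<and> \<sigma> (Suc i) = hi) \<or> (\<sigma> i = hi \<and> \<sigma> (Suc i) = lo)"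
            using a1 unfolding adj_def by blast
          have "min (\<sigma> i) (\<sigma> (Suc i)) = lo" "max (\<sigma> i) (\<sigma> (Suc i)) = hi"
            using cc a2 by auto
          moreover have "c lo \<noteq> c hi" using cne[OF i] cc by auto
          ultimately show ?thesis using noasc[OF i] by auto
        qed
        have "{v\<in>{1..n}. c v = 1} \<subseteq> PL"
        proof
          fix l assume l: "l \<in> {v\<in>{1..n}. c v = 1}"
          have "m < l" if "adj l m" for m
          proof (rule ccontr)
            assume "\<not> m < l"
            moreover have "m \<noteq> l" using that edge_ne unfolding adj_def by metis
            ultimately have "l < m" by simp
            then have "c m < c l" using desc that by blast
            moreover have "m \<in> {1..n}" using adj_rng that by blast
            then have "c m \<ge> 1" using cE by auto
            ultimately show False using l by simp
          qed
          then show "l \<in> PL" using l unfolding PL_def by blast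
        qed
        then have "card {v\<in>{1..n}. c v = 1} \<le> card PL" using finPL by (rule card_mono[rotated])
        then have False using c1 by simp }
      then show ?thesis by blast
    qed
    then have "card ?SB = 0" by (simp only: card.empty)
    then show ?thesis unfolding cqf_coeff_def .
  qed
  show False using eq lhs rhs by simp
qed


lemma adp_len: "length (ad_pattern n \<sigma>) = n - 1"
  by (simp add: ad_pattern_def)

lemma adp_nth: "k < n - 1 \<Longrightarrow> ad_pattern n \<sigma> ! k = (if \<sigma> (Suc k) < \<sigma> (Suc (Suc k)) then A else D)"
  by (simp add: ad_pattern_def)

lemma adpA: "k < n - 1 \<Longrightarrow> ad_pattern n \<sigma> ! k = A \<Longrightarrow> \<sigma> (Suc k) < \<sigma> (Suc (Suc k))"
  using adp_nth[of k n \<sigma>] by (auto split: if_splits)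

lemma adpD: "\<sigma> permutes S \<Longrightarrow> k < n - 1 \<Longrightarrow> ad_pattern n \<sigma> ! k = D \<Longrightarrow> \<sigma> (Suc (Suc k)) < \<sigma> (Suc k)"
proof -
  assume p: "\<sigma> permutes S" and k: "k < n - 1" and d: "ad_pattern n \<sigma> ! k = D"
  have "\<not> \<sigma> (Suc k) < \<sigma> (Suc (Suc k))" using adp_nth[OF k, of \<sigma>] d by (auto split: if_splits)
  moreover have "\<sigma> (Suc k) \<noteq> \<sigma> (Suc (Suc k))" using permutes_inj[OF p] by (metis injD n_not_Suc_n)
  ultimately show ?thesis by simp
qed

theorem corollary4p6:
  fixes n :: nat and \<sigma> :: "nat \<Rightarrow> nat"
  assumes "labeled_path n \<sigma>"
    and "(\<exists>u v. ad_pattern n \<sigma> = u @ [A, A, D, D] @ v)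
       \<or> (\<exists>v. ad_pattern n \<sigma> = [A, D, D] @ v)
       \<or> (\<exists>u. ad_pattern n \<sigma> = u @ [A, A, D])"
  shows "\<not> cqf_symmetric n \<sigma>"
proof -
  have perm: "\<sigma> permutes {1..n}" using assms(1) unfolding labeled_path_def .
  from assms(2) consider (c1) u w where "ad_pattern n \<sigma> = u @ [A, A, D, D] @ w"
    | (c2) w where "ad_pattern n \<sigma> = [A, D, D] @ w"
    | (c3) u where "ad_pattern n \<sigma> = u @ [A, A, D]" by blast
  then show ?thesis
  proof cases
    case c1
    define p where "p = length u"
    have len: "p + 4 \<le> n - 1" using arg_cong[OF c1, of length] adp_len[of n \<sigma>] unfolding p_def by simp
    have e: "ad_pattern n \<sigma> ! p = A" "ad_pattern n \<sigma> ! (p+1) = A"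
      "ad_pattern n \<sigma> ! (p+2) = D" "ad_pattern n \<sigma> ! (p+3) = D"
      using c1 unfolding p_def by (simp_all add: nth_append)
    have f1: "\<sigma> (p+1) < \<sigma> (p+2)" using adpA[OF _ e(1)] len by (simp add: numeral_eq_Suc)
    have f2: "\<sigma> (p+2) < \<sigma> (p+3)" using adpA[OF _ e(2)] len by (simp add: numeral_eq_Suc)
    have f3: "\<sigma> (p+4) < \<sigma> (p+3)" using adpD[OF perm _ e(3)] len by (simp add: numeral_eq_Suc)
    have f4: "\<sigma> (p+5) < \<sigma> (p+4)" using adpD[OF perm _ e(4)] len by (simp add: numeral_eq_Suc)
    show ?thesis
      by (rule main_lemma[OF perm, of "p+3"]) (use len f1 f2 f3 f4 in \<open>simp_all add: numeral_eq_Suc\<close>)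
  next
    case c2
    have len: "3 \<le> n - 1" using arg_cong[OF c2, of length] adp_len[of n \<sigma>] by simp
    have e: "ad_pattern n \<sigma> ! 0 = A" "ad_pattern n \<sigma> ! 1 = D" "ad_pattern n \<sigma> ! 2 = D"
      using c2 by simp_all
    have f1: "\<sigma> 1 < \<sigma> 2" using adpA[OF _ e(1)] len by (simp add: numeral_eq_Suc)
    have f2: "\<sigma> 3 < \<sigma> 2" using adpD[OF perm _ e(2)] len by (simp add: numeral_eq_Suc)
    have f3: "\<sigma> 4 < \<sigma> 3" using adpD[OF perm _ e(3)] len by (simp add: numeral_eq_Suc)
    show ?thesis
      by (rule main_lemma[OF perm, of 2]) (use len f1 f2 f3 in \<open>simp_all add: numeral_eq_Suc\<close>)
  next
    case c3
    define p where "p = length u"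
    have len: "n = p + 4" using arg_cong[OF c3, of length] adp_len[of n \<sigma>] unfolding p_def by simp
    have e: "ad_pattern n \<sigma> ! p = A" "ad_pattern n \<sigma> ! (p+1) = A"
      "ad_pattern n \<sigma> ! (p+2) = D"
      using c3 unfolding p_def by (simp_all add: nth_append)
    have f1: "\<sigma> (p+1) < \<sigma> (p+2)" using adpA[OF _ e(1)] len by (simp add: numeral_eq_Suc)
    have f2: "\<sigma> (p+2) < \<sigma> (p+3)" using adpA[OF _ e(2)] len by (simp add: numeral_eq_Suc)
    have f3: "\<sigma> (p+4) < \<sigma> (p+3)" using adpD[OF perm _ e(3)] len by (simp add: numeral_eq_Suc)
    show ?thesis
      by (rule main_lemma[OF perm, of "p+3"]) (use len f1 f2 f3 in \<open>simp_all add: numeral_eq_Suc\<close>)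
  qed
qed

end
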